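(* In the general surveillance-evasion game described in the context, let $V$ be its value and, for $t\ge0$, let $\Gamma(t)=\partial\mathcal{L}(t)$ with $\mathcal{L}(t)=\{X\in\Omega: V(X)\ge t\}$. For any $X\in\Omega$, if there exist $0\le t_1<t_2$ such that $X\in\Gamma(t)$ for all $t\in[t_1,t_2]$, then $V$ is discontinuous at $X$.
   Context: Let $\mathcal{O}\subset\mathbb{R}^2$ be open, bounded, with Lipschitz boundary, $\Omega_{\mathrm{free}}=\mathbb{R}^2\setminus\mathcal{O}$. There are $m$ evaders $E=(E^{(1)},\dots,E^{(m)})$ and $n$ pursuers $P=(P^{(1)},\dots,P^{(n)})$ with dynamics $\dot E^{(i)}=f(E^{(i)},a^{(i)}(t))$, $\dot P^{(j)}=g(P^{(j)},b^{(j)}(t))$, where $\mathcal{A},\mathcal{B}$ are compact control sets, $f:\Omega_{\mathrm{free}}\times\mathcal{A}\to\mathbb{R}^2$, $g:\Omega_{\mathrm{free}}\times\mathcal{B}\to\mathbb{R}^2$ are Lipschitz in the state, the velocity sets $\{f(E,a):a\in\mathcal{A}\}$, $\{g(P,b):b\in\mathcal{B}\}$ are convex, and for every point of $\partial\mathcal{O}$ each velocity set meets the interior of Clarke's tangent cone to $\Omega_{\mathrm{free}}$ there. Controls $a:(0,\infty)\to\mathcal{A}^m$, $b:(0,\infty)\to\mathcal{B}^n$ are measurable and admissible if all players stay in $\Omega_{\mathrm{free}}$ for all times. Target $\mathcal{T}=\{(E,P)\in\Omega_{\mathrm{free}}^{m+n}:[E^{(i)},P^{(j)}]\cap\mathcal{O}\ne\emptyset\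 \forall i,j\}$; $\partial\mathcal{T}$ and all boundaries are taken relative to the topology of $\Omega_{\mathrm{free}}^{m+n}$; game domain $\Omega=\Omega_{\mathrm{free}}^{m+n}\setminus\mathcal{T}$. End time $t^\ast=\min\{t\ge0:(E(t),P(t))\in\partial\mathcal{T}\}$ ($+\infty$ if none). The value is $V(X)=\inf_\alpha\sup_b t^\ast(X,\alpha[b],b)$, the inf over non-anticipating strategies $\alpha$ of the evaders (maps from admissible pursuer controls to admissible evader controls such that $b_1=b_2$ a.e. on $(0,\tau)$ implies $\alpha[b_1]=\alpha[b_2]$ a.e. on $(0,\tau)$) and the sup over admissible pursuer controls $b$. *)

theory Defs
  imports "HOL-Analysis.Analysis"
begin

definition lipschitz_boundary :: "(real^2) set \<Rightarrow> bool" where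
  "lipschitz_boundary Obs \<longleftrightarrow>
     (\<forall>p\<in>frontier Obs. \<exists>(R::real^2 \<Rightarrow> real^2) (\<gamma>::real \<Rightarrow> real) L r h.
        orthogonal_transformation R \<and> L-lipschitz_on UNIV \<gamma> \<and> r > 0 \<and> h > 0 \<and>
        \<gamma> 0 = 0 \<and> (\<forall>s. \<bar>s\<bar> < r \<longrightarrow> \<bar>\<gamma> s\<bar> < h) \<and>
        (\<forall>x. \<bar>R (x - p) $ 1\<bar> < r \<and> \<bar>R (x - p) $ 2\<bar> < h \<longrightarrow>
              (x \<in> Obs \<longleftrightarrow> R (x - p) $ 2 < \<gamma> (R (x - p) $ 1))))"

definition clarke_tangent_cone :: "'a::real_normed_vector set \<Rightarrow> 'a \<Rightarrow> 'a set" where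
  "clarke_tangent_cone S x = {v. \<forall>(xs::nat \<Rightarrow> 'a) (ts::nat \<Rightarrow> real).
      (\<forall>k. xs k \<in> S) \<and> xs \<longlonglongrightarrow> x \<and> (\<forall>k. ts k > 0) \<and> ts \<longlonglongrightarrow> 0 \<longrightarrow>
      (\<exists>vs. vs \<longlonglongrightarrow> v \<and> (\<forall>k. xs k + ts k *\<^sub>R vs k \<in> S))}"

text \<open>Joint state space \<Omega>_free^(m+n): evaders indexed by 'm, pursuers by 'n.\<close>
definition free_space :: "(real^2) set \<Rightarrow> ((real^2^'m) \<times> (real^2^'n)) set" where
  "free_space Obs = {(E, P). (\<forall>i. E $ i \<notin> Obs) \<and> (\<forall>j. P $ j \<notin> Obs)}"

definition target :: "(real^2) set \<Rightarrow> ((real^2^'m) \<times> (real^2^'n)) set" where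
  "target Obs = {(E, P) \<in> free_space Obs.
      \<forall>i j. closed_segment (E $ i) (P $ j) \<inter> Obs \<noteq> {}}"

definition game_domain :: "(real^2) set \<Rightarrow> ((real^2^'m) \<times> (real^2^'n)) set" where
  "game_domain Obs = free_space Obs - target Obs"

definition is_traj :: "(real^2) set \<Rightarrow> (real^2 \<Rightarrow> 'c \<Rightarrow> real^2) \<Rightarrow> real^2^'k
    \<Rightarrow> (real \<Rightarrow> 'c^'k) \<Rightarrow> (real \<Rightarrow> real^2^'k) \<Rightarrow> bool" where
  "is_traj Obs h x0 c Y \<longleftrightarrow> Y 0 = x0 \<and>
     (\<forall>t\<ge>0. \<forall>i. Y t $ i \<notin> Obs \<and>
        ((\<lambda>s. h (Y s $ i) (c s $ i)) has_integral (Y t $ i - x0 $ i)) {0..t})"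

definition admissible_ctrl :: "(real^2) set \<Rightarrow> 'c::topological_space set
    \<Rightarrow> (real^2 \<Rightarrow> 'c \<Rightarrow> real^2) \<Rightarrow> real^2^'k \<Rightarrow> (real \<Rightarrow> 'c^'k) \<Rightarrow> bool" where
  "admissible_ctrl Obs C h x0 c \<longleftrightarrow>
     (\<forall>t>0. \<forall>i. c t $ i \<in> C) \<and>
     (\<forall>i. (\<lambda>t. c t $ i) \<in> borel_measurable (restrict_space lebesgue {0<..})) \<and>
     (\<exists>Y. is_traj Obs h x0 c Y)"

definition end_time :: "(real^2) set \<Rightarrow> (real \<Rightarrow> (real^2^'m) \<times> (real^2^'n)) \<Rightarrow> ereal" where
  "end_time Obs Z = Inf {ereal t | t. t \<ge> 0 \<and>
      Z t \<in> (subtopology euclidean (free_space Obs)) frontier_of (target Obs)}"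

definition payoff :: "(real^2) set \<Rightarrow> (real^2 \<Rightarrow> 'ca \<Rightarrow> real^2) \<Rightarrow> (real^2 \<Rightarrow> 'cb \<Rightarrow> real^2)
    \<Rightarrow> (real^2^'m) \<times> (real^2^'n) \<Rightarrow> (real \<Rightarrow> 'ca^'m) \<Rightarrow> (real \<Rightarrow> 'cb^'n) \<Rightarrow> ereal" where
  "payoff Obs f g X a b = (THE \<tau>. \<exists>E P. is_traj Obs f (fst X) a E \<and> is_traj Obs g (snd X) b P
      \<and> \<tau> = end_time Obs (\<lambda>t. (E t, P t)))"

definition evader_strategies :: "(real^2) set \<Rightarrow> 'ca::topological_space set \<Rightarrow> 'cb::topological_space set
    \<Rightarrow> (real^2 \<Rightarrow> 'ca \<Rightarrow> real^2) \<Rightarrow> (real^2 \<Rightarrow> 'cb \<Rightarrow> real^2) \<Rightarrow> (real^2^'m) \<times> (real^2^'n)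
    \<Rightarrow> ((real \<Rightarrow> 'cb^'n) \<Rightarrow> (real \<Rightarrow> 'ca^'m)) set" where
  "evader_strategies Obs A B f g X = {\<alpha>.
     (\<forall>b. admissible_ctrl Obs B g (snd X) b \<longrightarrow> admissible_ctrl Obs A f (fst X) (\<alpha> b)) \<and>
     (\<forall>b1 b2 \<tau>. admissible_ctrl Obs B g (snd X) b1 \<and> admissible_ctrl Obs B g (snd X) b2 \<and>
        (AE t in lebesgue. t \<in> {0<..<\<tau>} \<longrightarrow> b1 t = b2 t) \<longrightarrow>
        (AE t in lebesgue. t \<in> {0<..<\<tau>} \<longrightarrow> \<alpha> b1 t = \<alpha> b2 t))}"

definition game_value :: "(real^2) set \<Rightarrow> 'ca::topological_space set \<Rightarrow> 'cb::topological_space set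
    \<Rightarrow> (real^2 \<Rightarrow> 'ca \<Rightarrow> real^2) \<Rightarrow> (real^2 \<Rightarrow> 'cb \<Rightarrow> real^2) \<Rightarrow> (real^2^'m) \<times> (real^2^'n) \<Rightarrow> ereal" where
  "game_value Obs A B f g X =
     (INF \<alpha> \<in> evader_strategies Obs A B f g X.
        SUP b \<in> {b. admissible_ctrl Obs B g (snd X) b}. payoff Obs f g X (\<alpha> b) b)"

definition level_set :: "(real^2) set \<Rightarrow> 'ca::topological_space set \<Rightarrow> 'cb::topological_space set
    \<Rightarrow> (real^2 \<Rightarrow> 'ca \<Rightarrow> real^2) \<Rightarrow> (real^2 \<Rightarrow> 'cb \<Rightarrow> real^2) \<Rightarrow> real
    \<Rightarrow> ((real^2^'m) \<times> (real^2^'n)) set" where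
  "level_set Obs A B f g t = {X \<in> game_domain Obs. game_value Obs A B f g X \<ge> ereal t}"

definition Gamma :: "(real^2) set \<Rightarrow> 'ca::topological_space set \<Rightarrow> 'cb::topological_space set
    \<Rightarrow> (real^2 \<Rightarrow> 'ca \<Rightarrow> real^2) \<Rightarrow> (real^2 \<Rightarrow> 'cb \<Rightarrow> real^2) \<Rightarrow> real
    \<Rightarrow> ((real^2^'m) \<times> (real^2^'n)) set" where
  "Gamma Obs A B f g t = (subtopology euclidean (free_space Obs)) frontier_of (level_set Obs A B f g t)"

end

theory Submission
  imports Defs
begin
lemma picard:
  fixes G :: "'a::euclidean_space \<Rightarrow> 'a" and x0 :: 'a
  assumes lip: "\<And>x y. norm (G x - G y) \<le> K * norm (x - y)"
    and K: "K \<ge> 0" and tau: "\<tau> > 0" "\<tau> * K \<le> 1/2"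
  shows "\<exists>y. y t0 = x0 \<and> (\<forall>t\<in>{t0..t0+\<tau>}. ((\<lambda>s. G (y s)) has_integral (y t - x0)) {t0..t}
     \<and> norm (y t - x0) \<le> 2*\<tau>*norm (G x0))"
proof -
  define cl where "cl t = max t0 (min (t0+\<tau>) t)" for t
  have cl_cont: "continuous_on UNIV cl" unfolding cl_def by (intro continuous_intros)
  have cl_range: "cl t \<in> {t0..t0+\<tau>}" for t using tau unfolding cl_def by auto
  have cl_id: "t \<in> {t0..t0+\<tau>} \<Longrightarrow> cl t = t" for t unfolding cl_def by auto
  have Gc: "continuous_on UNIV G"
  proof (rule continuous_onI, goal_cases)
    case (1 x e)
    show ?case
      apply (rule exI[of _ "e / (K + 1)"])
      using 1 K lip[of _ x]
      apply (auto simp: dist_norm field_simps)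
      by (smt (verit, del_insts) mult_left_mono mult_nonneg_nonneg norm_ge_zero)
  qed
  define P where "P u = (\<lambda>t. x0 + integral {t0..cl t} (\<lambda>s. G (apply_bcontfun u s)))" for u :: "real \<Rightarrow>\<^sub>C 'a"
  have Gu_cont: "continuous_on S (\<lambda>s. G (apply_bcontfun u s))" for u :: "real \<Rightarrow>\<^sub>C 'a" and S
    by (rule continuous_on_compose2[OF Gc]) auto
  have Gu_int: "(\<lambda>s. G (apply_bcontfun u s)) integrable_on {a..b}" for u :: "real \<Rightarrow>\<^sub>C 'a" and a b :: real
    by (rule integrable_continuous_interval[OF Gu_cont])
  have P_bc: "P u \<in> bcontfun" for u :: "real \<Rightarrow>\<^sub>C 'a"
  proof -
    have c1: "continuous_on {t0..t0+\<tau>} (\<lambda>x. x0 + integral {t0..x} (\<lambda>s. G (apply_bcontfun u s)))"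
      by (intro continuous_intros indefinite_integral_continuous_1 Gu_int)
    have "continuous_on UNIV (P u)"
      unfolding P_def
      by (rule continuous_on_compose2[OF c1 cl_cont]) (use cl_range in auto)
    moreover have "range (P u) \<subseteq> (\<lambda>x. x0 + integral {t0..x} (\<lambda>s. G (apply_bcontfun u s))) ` {t0..t0+\<tau>}"
      unfolding P_def using cl_range by auto
    moreover have "compact ((\<lambda>x. x0 + integral {t0..x} (\<lambda>s. G (apply_bcontfun u s))) ` {t0..t0+\<tau>})"
      by (rule compact_continuous_image[OF c1]) simp
    ultimately show ?thesis unfolding bcontfun_def
      using bounded_subset compact_imp_bounded by auto
  qed
  define \<Phi> where "\<Phi> u = Bcontfun (P u)" for u
  have \<Phi>_app: "apply_bcontfun (\<Phi> u) t = P u t" for u :: "real \<Rightarrow>\<^sub>C 'a" and t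
    unfolding \<Phi>_def using P_bc Bcontfun_inverse by metis
  have contr: "dist (\<Phi> u) (\<Phi> w) \<le> (\<tau>*K) * dist u w" for u w :: "real \<Rightarrow>\<^sub>C 'a"
  proof (rule dist_bound)
    fix t
    have "dist (\<Phi> u t) (\<Phi> w t) = norm (integral {t0..cl t} (\<lambda>s. G (u s) - G (w s)))"
      unfolding \<Phi>_app P_def dist_norm
      by (subst integral_diff) (auto intro: Gu_int)
    also have "\<dots> \<le> (K * dist u w) * (cl t - t0)"
    proof (rule integral_bound)
      show "t0 \<le> cl t" using cl_range by auto
      show "continuous_on {t0..cl t} (\<lambda>s. G (u s) - G (w s))"
        by (intro continuous_intros Gu_cont)
      fix s
      have "norm (G (u s) - G (w s)) \<le> K * norm (u s - w s)" by (rule lip)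
      also have "\<dots> \<le> K * dist u w" using dist_bounded[of u s w] K
        by (simp add: dist_norm mult_left_mono)
      finally show "norm (G (u s) - G (w s)) \<le> K * dist u w" .
    qed
    also have "\<dots> \<le> (\<tau>*K) * dist u w"
    proof -
      have "cl t - t0 \<le> \<tau>" using cl_range[of t] by auto
      then have "(K * dist u w) * (cl t - t0) \<le> (K * dist u w) * \<tau>"
        using K zero_le_dist[of u w] by (intro mult_left_mono) auto
      then show ?thesis by (simp add: algebra_simps)
    qed
    finally show "dist (\<Phi> u t) (\<Phi> w t) \<le> (\<tau>*K) * dist u w" .
  qed
  obtain y where fixy: "\<Phi> y = y"
    using banach_fix_type[of "\<tau>*K" \<Phi>] contr tau K by auto
  have yeq: "apply_bcontfun y t = x0 + integral {t0..cl t} (\<lambda>s. G (y s))" for t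
    using \<Phi>_app[of y t] fixy unfolding P_def by simp
  define c0 where "c0 = (const_bcontfun x0 :: real \<Rightarrow>\<^sub>C 'a)"
  have c0_app: "apply_bcontfun c0 t = x0" for t unfolding c0_def by (simp add: const_bcontfun.rep_eq)
  have d1: "dist (\<Phi> c0) c0 \<le> \<tau> * norm (G x0)"
  proof (rule dist_bound)
    fix t
    have "dist (\<Phi> c0 t) (c0 t) = norm (integral {t0..cl t} (\<lambda>s. G x0))"
      unfolding \<Phi>_app P_def c0_app dist_norm by simp
    also have "\<dots> = (cl t - t0) * norm (G x0)" using cl_range[of t] by simp
    also have "\<dots> \<le> \<tau> * norm (G x0)" using cl_range[of t] by (simp add: mult_right_mono)
    finally show "dist (\<Phi> c0 t) (c0 t) \<le> \<tau> * norm (G x0)" .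
  qed
  have "dist y c0 \<le> dist (\<Phi> y) (\<Phi> c0) + dist (\<Phi> c0) c0"
    using fixy dist_triangle by metis
  also have "\<dots> \<le> (\<tau>*K) * dist y c0 + \<tau> * norm (G x0)" using contr d1 by (meson add_mono)
  finally have "dist y c0 \<le> (\<tau>*K) * dist y c0 + \<tau> * norm (G x0)" .
  moreover have "(\<tau>*K) * dist y c0 \<le> (1/2) * dist y c0" using tau zero_le_dist[of y c0] by (intro mult_right_mono) auto
  ultimately have dyc: "dist y c0 \<le> 2*\<tau>*norm (G x0)" by linarith
  show ?thesis
  proof (intro exI[of _ "apply_bcontfun y"] conjI ballI)
    show "y t0 = x0" using yeq[of t0] cl_id[of t0] tau by simp
    fix t assume t: "t \<in> {t0..t0+\<tau>}"
    have "y t - x0 = integral {t0..t} (\<lambda>s. G (y s))" using yeq[of t] cl_id[OF t] by simp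
    then show "((\<lambda>s. G (y s)) has_integral (y t - x0)) {t0..t}"
      using Gu_int integrable_integral by metis
    show "norm (y t - x0) \<le> 2*\<tau>*norm (G x0)"
      using dist_bounded[of y t c0] dyc c0_app by (simp add: dist_norm)
  qed
qed

lemma lip_extend:
  fixes g :: "real^2 \<Rightarrow> real^2"
  assumes S: "S \<noteq> {}" and L: "L \<ge> 0" and lip: "\<forall>x\<in>S. \<forall>y\<in>S. dist (g x) (g y) \<le> L * dist x y"
  shows "\<exists>G. (\<forall>x\<in>S. G x = g x) \<and> (\<forall>x y. norm (G x - G y) \<le> (2*L) * norm (x - y))"
proof -
  define h where "h k x = Inf ((\<lambda>y. g y $ k + L * dist x y) ` S)" for k x
  have compb: "\<bar>g y $ k - g z $ k\<bar> \<le> L * dist y z" if "y \<in> S" "z \<in> S" for y z k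
  proof -
    have "\<bar>g y $ k - g z $ k\<bar> = \<bar>(g y - g z) $ k\<bar>" by simp
    also have "\<dots> \<le> norm (g y - g z)" by (rule component_le_norm_cart)
    also have "\<dots> \<le> L * dist y z" using lip that by (simp add: dist_norm)
    finally show ?thesis .
  qed
  obtain y0 where y0: "y0 \<in> S" using S by auto
  have bdd: "bdd_below ((\<lambda>y. g y $ k + L * dist x y) ` S)" for k x
  proof (rule bdd_belowI2)
    fix y assume y: "y \<in> S"
    have "dist y y0 \<le> dist x y + dist x y0" by (metis dist_triangle dist_commute)
    then have "L * dist y y0 \<le> L * dist x y + L * dist x y0" using L
      by (metis distrib_left mult_left_mono)
    then show "g y0 $ k - L * dist x y0 \<le> g y $ k + L * dist x y"
      using compb[OF y y0, of k] by linarith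
  qed
  have hS: "h k x = g x $ k" if "x \<in> S" for k x
    unfolding h_def
  proof (rule cInf_eq_minimum)
    show "g x $ k \<in> (\<lambda>y. g y $ k + L * dist x y) ` S" using that by force
    fix z assume "z \<in> (\<lambda>y. g y $ k + L * dist x y) ` S"
    then obtain y where y: "y \<in> S" "z = g y $ k + L * dist x y" by auto
    show "g x $ k \<le> z" using compb[OF y(1) that, of k] y(2) by (simp add: dist_commute)
  qed
  have hL: "h k x \<le> h k x' + L * dist x x'" for k x x'
  proof -
    have "h k x - L * dist x x' \<le> h k x'"
      unfolding h_def[of k x']
    proof (rule cINF_greatest[OF S])
      fix y assume y: "y \<in> S"
      have "h k x \<le> g y $ k + L * dist x y"
        unfolding h_def by (rule cINF_lower[OF bdd y])
      moreover have "dist x y \<le> dist x x' + dist x' y" by (rule dist_triangle)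
      then have "L * dist x y \<le> L * dist x x' + L * dist x' y" using L
        by (metis distrib_left mult_left_mono)
      ultimately show "h k x - L * dist x x' \<le> g y $ k + L * dist x' y" by linarith
    qed
    then show ?thesis by linarith
  qed
  define G where "G x = (\<chi> k. h k x)" for x
  show ?thesis
  proof (intro exI[of _ G] conjI ballI allI)
    fix x assume "x \<in> S" then show "G x = g x" unfolding G_def using hS by (simp add: vec_eq_iff)
  next
    fix x y
    have "norm (G x - G y) \<le> (\<Sum>i\<in>UNIV. \<bar>(G x - G y) $ i\<bar>)" by (rule norm_le_l1_cart)
    also have "\<dots> \<le> of_nat (card (UNIV::2 set)) * (L * dist x y)"
    proof (rule sum_bounded_above)
      fix i :: 2
      show "\<bar>(G x - G y) $ i\<bar> \<le> L * dist x y"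
        using hL[of i x y] hL[of i y x] unfolding G_def by (simp add: dist_commute abs_le_iff)
    qed
    also have "\<dots> = (2*L) * norm (x - y)" by (simp add: dist_norm)
    finally show "norm (G x - G y) \<le> (2*L) * norm (x - y)" .
  qed
qed

lemma hypertangent:
  fixes Obs :: "(real^2) set"
  assumes LB: "lipschitz_boundary Obs" and p: "p \<in> frontier Obs"
    and v: "v \<in> interior (clarke_tangent_cone (- Obs) p)"
  shows "\<exists>\<delta>>0. \<forall>x w t. x \<notin> Obs \<and> dist x p < \<delta> \<and> dist w v < \<delta> \<and> 0 < t \<and> t < \<delta>
           \<longrightarrow> x + t *\<^sub>R w \<notin> Obs"
proof -
  obtain R :: "real^2 \<Rightarrow> real^2" and \<gamma> :: "real \<Rightarrow> real" and L r h where
    R: "orthogonal_transformation R" and \<gamma>: "L-lipschitz_on UNIV \<gamma>" and r: "r > 0" and h: "h > 0"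
    and box: "\<And>x. \<bar>R (x - p) $ 1\<bar> < r \<Longrightarrow> \<bar>R (x - p) $ 2\<bar> < h \<Longrightarrow>
              (x \<in> Obs \<longleftrightarrow> R (x - p) $ 2 < \<gamma> (R (x - p) $ 1))"
    using LB p unfolding lipschitz_boundary_def by metis
  have linR: "linear R" using R by (rule orthogonal_transformation_linear)
  have blR: "bounded_linear R" using linR by (simp add: linear_conv_bounded_linear)
  have L0: "L \<ge> 0" using \<gamma> by (rule lipschitz_on_nonneg)
  have \<gamma>L: "\<gamma> a \<le> \<gamma> b + L * \<bar>a - b\<bar>" for a b
    using lipschitz_onD[OF \<gamma>, of a b] by (simp add: dist_real_def abs_le_iff)
  obtain e where e: "e > 0" "ball v e \<subseteq> clarke_tangent_cone (- Obs) p"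
    using v by (meson mem_interior)
  obtain E where E: "R E = axis 2 1" using orthogonal_transformation_surj[OF R] by (metis surjD)
  have nE: "norm E = 1" using orthogonal_transformation_norm[OF R, of E] E by simp
  define c where "c = e/2"
  have c: "c > 0" "c < e" using e by (auto simp: c_def)
  define u where "u = v - c *\<^sub>R E"
  have uC: "u \<in> clarke_tangent_cone (- Obs) p"
    using e(2) c nE unfolding u_def by (auto simp: dist_norm)
  show ?thesis
  proof (rule ccontr)
    assume "\<not> ?thesis"
    then have "\<forall>k::nat. \<exists>x w t. x \<notin> Obs \<and> dist x p < 1/(Suc k) \<and> dist w v < 1/(Suc k) \<and> 0 < t \<and> t < 1/(Suc k)
           \<and> x + t *\<^sub>R w \<in> Obs"
      by (metis of_nat_0_less_iff zero_less_Suc zero_less_divide_1_iff)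
    then obtain xs ws ts where S: "\<And>k::nat. xs k \<notin> Obs \<and> dist (xs k) p < 1/(Suc k) \<and> dist (ws k) v < 1/(Suc k) \<and> 0 < ts k \<and> ts k < 1/(Suc k)
           \<and> xs k + ts k *\<^sub>R ws k \<in> Obs"
      by metis
    have lim1: "(\<lambda>k. 1 / real (Suc k)) \<longlonglongrightarrow> 0" by (rule LIMSEQ_inverse_real_of_nat[unfolded inverse_eq_divide])
    have xs_lim: "xs \<longlonglongrightarrow> p"
      by (rule tendsto_dist_iff[THEN iffD2], rule Lim_null_comparison[OF _ lim1]) (use S in \<open>auto intro!: always_eventually less_imp_le\<close>)
    have ws_lim: "ws \<longlonglongrightarrow> v"
      by (rule tendsto_dist_iff[THEN iffD2], rule Lim_null_comparison[OF _ lim1]) (use S in \<open>auto intro!: always_eventually less_imp_le\<close>)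
    have "norm (ts k) \<le> 1 / real (Suc k)" for k using S[of k] by simp
    then have ts_lim: "ts \<longlonglongrightarrow> 0"
      by (intro Lim_null_comparison[OF _ lim1] always_eventually) auto
    obtain vs where vs: "vs \<longlonglongrightarrow> u" "\<And>k. xs k + ts k *\<^sub>R vs k \<in> - Obs"
    proof -
      have "(\<forall>k. xs k \<in> - Obs) \<and> xs \<longlonglongrightarrow> p \<and> (\<forall>k. 0 < ts k) \<and> ts \<longlonglongrightarrow> 0"
        using S xs_lim ts_lim by auto
      then have "\<exists>vs. vs \<longlonglongrightarrow> u \<and> (\<forall>k. xs k + ts k *\<^sub>R vs k \<in> - Obs)"
        using uC[unfolded clarke_tangent_cone_def] by blast
      then show ?thesis using that by blast
    qed
    define z where "z k = xs k + ts k *\<^sub>R vs k" for k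
    define d where "d k = ws k - vs k" for k
    have zd: "xs k + ts k *\<^sub>R ws k = z k + ts k *\<^sub>R d k" for k
      unfolding z_def d_def by (simp add: algebra_simps)
    have z_lim: "z \<longlonglongrightarrow> p"
      unfolding z_def using tendsto_add[OF xs_lim tendsto_scaleR[OF ts_lim vs(1)]] by simp
    have d_lim: "d \<longlonglongrightarrow> c *\<^sub>R E"
      unfolding d_def using tendsto_diff[OF ws_lim vs(1)] by (simp add: u_def)
    have Rd_lim: "(\<lambda>k. R (d k)) \<longlonglongrightarrow> c *\<^sub>R axis 2 1"
      using bounded_linear.tendsto[OF blR d_lim] E linear_cmul[OF linR] by simp
    have Rd1: "(\<lambda>k. R (d k) $ 1) \<longlonglongrightarrow> 0" using tendsto_vec_nth[OF Rd_lim, of 1] by (simp add: axis_def)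
    have Rd2: "(\<lambda>k. R (d k) $ 2) \<longlonglongrightarrow> c" using tendsto_vec_nth[OF Rd_lim, of 2] by (simp add: axis_def)
    have Qz: "(\<lambda>k. R (z k - p)) \<longlonglongrightarrow> 0"
      using bounded_linear.tendsto[OF blR tendsto_diff[OF z_lim tendsto_const[of p]]] linear_0[OF linR] by simp
    have zd_lim: "(\<lambda>k. z k + ts k *\<^sub>R d k) \<longlonglongrightarrow> p"
      using tendsto_add[OF z_lim tendsto_scaleR[OF ts_lim d_lim]] by simp
    have Qzd: "(\<lambda>k. R (z k + ts k *\<^sub>R d k - p)) \<longlonglongrightarrow> 0"
      using bounded_linear.tendsto[OF blR tendsto_diff[OF zd_lim tendsto_const[of p]]] linear_0[OF linR] by simp
    have ev_lt: "eventually (\<lambda>k. \<bar>f k\<bar> < b) sequentially" if "f \<longlonglongrightarrow> 0" "b > 0" for f :: "nat \<Rightarrow> real" and b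
      using tendsto_iff[THEN iffD1, OF that(1), rule_format, OF that(2)] by (simp add: dist_real_def)
    have ev_lt2: "eventually (\<lambda>k. \<bar>f k $ i\<bar> < b) sequentially" if "f \<longlonglongrightarrow> 0" "b > 0" for f :: "nat \<Rightarrow> real^2" and b i
      using ev_lt[OF _ that(2), of "\<lambda>k. f k $ i"] tendsto_vec_nth[OF that(1), of i] by simp
    have "eventually (\<lambda>k. \<bar>R (d k) $ 1\<bar> < c / (2*(L+1)) \<and> \<bar>R (d k) $ 2 - c\<bar> < c/2 \<and>
        \<bar>R (z k - p) $ 1\<bar> < r \<and> \<bar>R (z k - p) $ 2\<bar> < h \<and>
        \<bar>R (z k + ts k *\<^sub>R d k - p) $ 1\<bar> < r \<and> \<bar>R (z k + ts k *\<^sub>R d k - p) $ 2\<bar> < h) sequentially"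
    proof (intro eventually_conj)
      show "eventually (\<lambda>k. \<bar>R (d k) $ 1\<bar> < c / (2*(L+1))) sequentially"
        using ev_lt[OF Rd1] c L0 by simp
      show "eventually (\<lambda>k. \<bar>R (d k) $ 2 - c\<bar> < c/2) sequentially"
      proof -
        have "(\<lambda>k. R (d k) $ 2 - c) \<longlonglongrightarrow> 0" using tendsto_diff[OF Rd2 tendsto_const[of c]] by simp
        then show ?thesis using ev_lt[of _ "c/2"] c by simp
      qed
      show "eventually (\<lambda>k. \<bar>R (z k - p) $ 1\<bar> < r) sequentially"
        using ev_lt2[OF Qz, of _ 1] r by simp
      show "eventually (\<lambda>k. \<bar>R (z k - p) $ 2\<bar> < h) sequentially"
        using ev_lt2[OF Qz, of _ 2] h by simp
      show "eventually (\<lambda>k. \<bar>R (z k + ts k *\<^sub>R d k - p) $ 1\<bar> < r) sequentially"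
        using ev_lt2[OF Qzd, of _ 1] r by simp
      show "eventually (\<lambda>k. \<bar>R (z k + ts k *\<^sub>R d k - p) $ 2\<bar> < h) sequentially"
        using ev_lt2[OF Qzd, of _ 2] h by simp
    qed
    then obtain N where N: "\<forall>n\<ge>N. \<bar>R (d n) $ 1\<bar> < c / (2*(L+1)) \<and> \<bar>R (d n) $ 2 - c\<bar> < c/2 \<and>
        \<bar>R (z n - p) $ 1\<bar> < r \<and> \<bar>R (z n - p) $ 2\<bar> < h \<and>
        \<bar>R (z n + ts n *\<^sub>R d n - p) $ 1\<bar> < r \<and> \<bar>R (z n + ts n *\<^sub>R d n - p) $ 2\<bar> < h"
      unfolding eventually_sequentially by blast
    define k where "k = N"
    have k: "\<bar>R (d k) $ 1\<bar> < c / (2*(L+1))" "\<bar>R (d k) $ 2 - c\<bar> < c/2"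
        "\<bar>R (z k - p) $ 1\<bar> < r" "\<bar>R (z k - p) $ 2\<bar> < h"
        "\<bar>R (z k + ts k *\<^sub>R d k - p) $ 1\<bar> < r" "\<bar>R (z k + ts k *\<^sub>R d k - p) $ 2\<bar> < h"
      using N unfolding k_def by auto
    have zk: "z k \<notin> Obs" using vs(2)[of k] unfolding z_def by simp
    then have g1: "R (z k - p) $ 2 \<ge> \<gamma> (R (z k - p) $ 1)" using box[OF k(3) k(4)] by simp
    have Rsplit: "R (z k + ts k *\<^sub>R d k - p) = R (z k - p) + ts k *\<^sub>R R (d k)"
    proof -
      have "R (z k + ts k *\<^sub>R d k - p) = R ((z k - p) + ts k *\<^sub>R d k)" by (simp add: algebra_simps)
      also have "\<dots> = R (z k - p) + ts k *\<^sub>R R (d k)" using linear_add[OF linR] linear_cmul[OF linR] by simp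
      finally show ?thesis .
    qed
    define a1 where "a1 = R (d k) $ 1"
    define a2 where "a2 = R (d k) $ 2"
    have Lc: "L * \<bar>a1\<bar> \<le> c/2"
    proof -
      have "L * \<bar>a1\<bar> \<le> L * (c / (2*(L+1)))" using k(1) L0 unfolding a1_def by (intro mult_left_mono) auto
      also have "\<dots> \<le> c/2" using c L0 by (simp add: field_simps)
      finally show ?thesis .
    qed
    have a2: "a2 > c/2" using k(2) unfolding a2_def by linarith
    have tk: "ts k > 0" using S by auto
    have "\<gamma> (R (z k - p) $ 1 + ts k * a1) \<le> \<gamma> (R (z k - p) $ 1) + L * \<bar>ts k * a1\<bar>"
      using \<gamma>L[of "R (z k - p) $ 1 + ts k * a1" "R (z k - p) $ 1"] by simp
    also have "L * \<bar>ts k * a1\<bar> = ts k * (L * \<bar>a1\<bar>)" using tk by (simp add: abs_mult)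
    also have "\<dots> \<le> ts k * a2" using Lc a2 tk by (intro mult_left_mono) auto
    finally have "\<gamma> (R (z k - p) $ 1 + ts k * a1) \<le> R (z k - p) $ 2 + ts k * a2" using g1 by linarith
    then have "\<not> R (z k + ts k *\<^sub>R d k - p) $ 2 < \<gamma> (R (z k + ts k *\<^sub>R d k - p) $ 1)"
      unfolding Rsplit a1_def a2_def by simp
    then have "z k + ts k *\<^sub>R d k \<notin> Obs" using box[OF k(5) k(6)] by simp
    then show False using S[of k] zd[of k] by simp
  qed
qed

lemma step_near:
  fixes Obs :: "(real^2) set" and f :: "real^2 \<Rightarrow> 'c \<Rightarrow> real^2" and G :: "real^2 \<Rightarrow> real^2"
  assumes lip: "\<And>x y. norm (G x - G y) \<le> K * norm (x - y)" and K: "K \<ge> 0"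
    and Gf: "\<And>x. x \<notin> Obs \<Longrightarrow> G x = f x a"
    and hyp: "\<forall>x w t. x \<notin> Obs \<and> dist x p < \<delta> \<and> dist w (G p) < \<delta> \<and> 0 < t \<and> t < \<delta>
           \<longrightarrow> x + t *\<^sub>R w \<notin> Obs"
    and \<delta>: "\<delta> > 0" and \<rho>: "\<rho> = \<delta> / (4*K+2)"
    and tau: "\<tau> > 0" "\<tau> * K \<le> 1/2" "\<tau> < \<delta>" "2*\<tau>*(norm (G p) + K*\<rho>) \<le> \<rho>"
    and x: "x \<notin> Obs" "dist x p < \<rho>"
  shows "\<exists>y. y t0 = x \<and> (\<forall>t\<in>{t0..t0+\<tau>}. y t \<notin> Obs \<and> ((\<lambda>s. f (y s) a) has_integral (y t - x)) {t0..t})"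
proof -
  obtain y where y0: "y t0 = x" and yint: "\<And>t. t\<in>{t0..t0+\<tau>} \<Longrightarrow> ((\<lambda>s. G (y s)) has_integral (y t - x)) {t0..t}"
    and ybd: "\<And>t. t\<in>{t0..t0+\<tau>} \<Longrightarrow> norm (y t - x) \<le> 2*\<tau>*norm (G x)"
    using picard[OF lip K tau(1,2), of t0 x] by metis
  have \<rho>pos: "\<rho> > 0" using \<rho> \<delta> K by simp
  have \<rho>\<delta>: "\<rho> < \<delta>"
  proof -
    have "K * (\<rho> * 4) \<ge> 0" using K \<rho>pos by simp
    moreover have "\<rho> * 2 + K * (\<rho> * 4) = \<delta>" using \<rho> \<delta> K by (simp add: field_simps)
    ultimately show ?thesis using \<rho>pos by linarith
  qed
  have \<rho>K: "K * (2*\<rho>) \<le> \<delta>/2"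
  proof -
    have "\<rho> * 2 + K * (\<rho> * 4) = \<delta>" using \<rho> \<delta> K by (simp add: field_simps)
    then show ?thesis using \<rho>pos by (simp add: algebra_simps)
  qed
  have Gx: "norm (G x) \<le> norm (G p) + K*\<rho>"
  proof -
    have "norm (G x) \<le> norm (G p) + norm (G x - G p)" by (metis norm_triangle_sub)
    also have "norm (G x - G p) \<le> K * norm (x - p)" by (rule lip)
    also have "\<dots> \<le> K * \<rho>" using x(2) K by (simp add: dist_norm mult_left_mono)
    finally show ?thesis by simp
  qed
  have yclose: "norm (y s - p) < 2*\<rho>" if s: "s \<in> {t0..t0+\<tau>}" for s
  proof -
    have "norm (y s - x) \<le> 2*\<tau>*norm (G x)" by (rule ybd[OF s])
    also have "\<dots> \<le> 2*\<tau>*(norm (G p) + K*\<rho>)" using Gx tau(1) by (simp add: mult_left_mono)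
    also have "\<dots> \<le> \<rho>" by (rule tau(4))
    finally have "norm (y s - x) \<le> \<rho>" .
    moreover have "norm (x - p) < \<rho>" using x(2) by (simp add: dist_norm)
    ultimately show ?thesis using norm_triangle_lt[of "y s - x" "x - p" "2*\<rho>"] by (simp add: algebra_simps)
  qed
  have Gy: "norm (G (y s) - G p) \<le> \<delta>/2" if s: "s \<in> {t0..t0+\<tau>}" for s
  proof -
    have "norm (G (y s) - G p) \<le> K * norm (y s - p)" by (rule lip)
    also have "\<dots> \<le> K * (2*\<rho>)" using yclose[OF s] K by (simp add: mult_left_mono)
    finally show ?thesis using \<rho>K by simp
  qed
  have yout: "y t \<notin> Obs" if t: "t \<in> {t0..t0+\<tau>}" for t
  proof (cases "t = t0")
    case True then show ?thesis using y0 x by simp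
  next
    case False
    then have tt: "t0 < t" using t by simp
    have i1: "((\<lambda>s. G (y s) - G p) has_integral (y t - x - (t - t0) *\<^sub>R G p)) {t0..t}"
      using has_integral_diff[OF yint[OF t] has_integral_const_real[of "G p" t0 t]] tt by simp
    have i1': "((\<lambda>s. G (y s) - G p) has_integral (y t - x - (t - t0) *\<^sub>R G p)) (cbox t0 t)"
      using i1 by simp
    have nb: "norm (y t - x - (t - t0) *\<^sub>R G p) \<le> \<delta>/2 * (t - t0)"
      using has_integral_bound[of "\<delta>/2", OF _ i1'] \<delta> Gy t tt by auto
    define w where "w = (1/(t - t0)) *\<^sub>R (y t - x)"
    have yw: "y t = x + (t - t0) *\<^sub>R w" unfolding w_def using tt by simp
    have "(1/(t-t0)) *\<^sub>R (y t - x - (t - t0) *\<^sub>R G p) = w - ((1/(t-t0)) * (t-t0)) *\<^sub>R G p"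
      unfolding w_def by (simp only: scaleR_diff_right scaleR_scaleR)
    then have "w - G p = (1/(t-t0)) *\<^sub>R (y t - x - (t - t0) *\<^sub>R G p)" using tt by simp
    then have "norm (w - G p) = (1/(t-t0)) * norm (y t - x - (t - t0) *\<^sub>R G p)" using tt by simp
    also have "\<dots> \<le> (1/(t-t0)) * (\<delta>/2 * (t - t0))" using nb tt by (intro mult_left_mono) auto
    also have "\<dots> = \<delta>/2" using tt by simp
    finally have "dist w (G p) < \<delta>" using \<delta> by (simp add: dist_norm)
    moreover have "t - t0 < \<delta>" using t tau(3) by simp
    ultimately show ?thesis using hyp x \<rho>\<delta> tt yw by auto
  qed
  show ?thesis
  proof (intro exI[of _ y] conjI ballI)
    show "y t0 = x" by (rule y0)
    fix t assume t: "t \<in> {t0..t0+\<tau>}"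
    show "y t \<notin> Obs" by (rule yout[OF t])
    show "((\<lambda>s. f (y s) a) has_integral (y t - x)) {t0..t}"
      by (rule has_integral_eq[OF _ yint[OF t]]) (use t yout Gf in auto)
  qed
qed

lemma step_far:
  fixes Obs :: "(real^2) set" and f :: "real^2 \<Rightarrow> 'c \<Rightarrow> real^2" and G :: "real^2 \<Rightarrow> real^2"
  assumes lip: "\<And>x y. norm (G x - G y) \<le> K * norm (x - y)" and K: "K \<ge> 0"
    and Gf: "\<And>x. x \<notin> Obs \<Longrightarrow> G x = f x a"
    and B: "B \<ge> 0" "\<And>z. z \<in> Obs \<Longrightarrow> norm z \<le> B"
    and dz: "dz > 0" "\<And>z. z \<in> Obs \<Longrightarrow> dz \<le> dist x z"
    and tau: "\<tau> > 0" "\<tau> * K \<le> 1/2" "2*\<tau>*(norm (G 0) + K*(2*B+1)) < dz" "2*\<tau>*(norm (G 0) + K) \<le> 1/2"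
    and x: "x \<notin> Obs"
  shows "\<exists>y. y t0 = x \<and> (\<forall>t\<in>{t0..t0+\<tau>}. y t \<notin> Obs \<and> ((\<lambda>s. f (y s) a) has_integral (y t - x)) {t0..t})"
proof -
  obtain y where y0: "y t0 = x" and yint: "\<And>t. t\<in>{t0..t0+\<tau>} \<Longrightarrow> ((\<lambda>s. G (y s)) has_integral (y t - x)) {t0..t}"
    and ybd: "\<And>t. t\<in>{t0..t0+\<tau>} \<Longrightarrow> norm (y t - x) \<le> 2*\<tau>*norm (G x)"
    using picard[OF lip K tau(1,2), of t0 x] by metis
  have Gx: "norm (G x) \<le> norm (G 0) + K * norm x"
  proof -
    have "norm (G x) \<le> norm (G 0) + norm (G x - G 0)" by (metis norm_triangle_sub)
    also have "norm (G x - G 0) \<le> K * norm (x - 0)" by (rule lip)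
    finally show ?thesis by simp
  qed
  have yout: "y t \<notin> Obs" if t: "t \<in> {t0..t0+\<tau>}" for t
  proof
    assume yz: "y t \<in> Obs"
    have b1: "norm (y t - x) \<le> 2*\<tau>*(norm (G 0) + K * norm x)"
      using ybd[OF t] Gx tau(1) by (smt (verit) mult_left_mono)
    show False
    proof (cases "norm x \<le> 2*B+1")
      case True
      have "K * norm x \<le> K*(2*B+1)" using True K by (simp add: mult_left_mono)
      then have "2*\<tau>*(norm (G 0) + K * norm x) \<le> 2*\<tau>*(norm (G 0) + K*(2*B+1))" using tau(1) by simp
      then have "norm (y t - x) < dz" using b1 tau(3) by linarith
      moreover have "dz \<le> dist x (y t)" by (rule dz(2)[OF yz])
      ultimately show False by (simp add: dist_norm norm_minus_commute)
    next
      case False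
      then have nx: "norm x \<ge> 1" using B by simp
      have "norm (G 0) \<le> norm (G 0) * norm x" using nx by (simp add: mult_le_cancel_left1)
      then have "2*\<tau>*(norm (G 0) + K * norm x) \<le> 2*\<tau>*((norm (G 0) + K) * norm x)"
        using tau(1) by (simp add: algebra_simps)
      also have "\<dots> = (2*\<tau>*(norm (G 0) + K)) * norm x" by simp
      also have "\<dots> \<le> (1/2) * norm x" using tau(4) by (intro mult_right_mono) auto
      finally have "norm (y t - x) \<le> norm x / 2" using b1 by simp
      moreover have "norm (y t) \<le> B" by (rule B(2)[OF yz])
      moreover have "norm x \<le> norm (y t) + norm (y t - x)" by (metis norm_triangle_sub norm_minus_commute)
      ultimately show False using False by linarith
    qed
  qed
  show ?thesis
  proof (intro exI[of _ y] conjI ballI)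
    show "y t0 = x" by (rule y0)
    fix t assume t: "t \<in> {t0..t0+\<tau>}"
    show "y t \<notin> Obs" by (rule yout[OF t])
    show "((\<lambda>s. f (y s) a) has_integral (y t - x)) {t0..t}"
      by (rule has_integral_eq[OF _ yint[OF t]]) (use t yout Gf in auto)
  qed
qed

lemma tau_aux:
  fixes \<rho> X \<tau> :: real
  assumes "\<rho> > 0" "X \<ge> 0" "\<tau> > 0" "\<tau> \<le> \<rho>/(2*X+1)"
  shows "2*\<tau>*X < \<rho>"
proof -
  have "\<tau> * (2*X+1) \<le> \<rho>" using assms by (simp add: field_simps)
  then show ?thesis using assms by (simp add: algebra_simps)
qed

lemma pos_aux: "u \<ge> 0 \<Longrightarrow> v \<ge> 0 \<Longrightarrow> 2*(u+v)+1 > (0::real)"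
  by simp

lemma viability:
  fixes Obs :: "(real^2) set" and A :: "'c::topological_space set" and f :: "real^2 \<Rightarrow> 'c \<Rightarrow> real^2"
  assumes opn: "open Obs" and bnd: "bounded Obs" and LB: "lipschitz_boundary Obs" and Ane: "A \<noteq> {}"
    and lip: "\<exists>L. \<forall>a\<in>A. L-lipschitz_on (- Obs) (\<lambda>x. f x a)"
    and tang: "\<forall>p\<in>frontier Obs. (\<lambda>a. f p a) ` A \<inter> interior (clarke_tangent_cone (- Obs) p) \<noteq> {}"
    and x0: "x0 \<notin> Obs"
  shows "\<exists>(c::real \<Rightarrow> 'c) (Y::real \<Rightarrow> real^2). (\<forall>t. c t \<in> A) \<and> c \<in> borel_measurable (restrict_space lebesgue {0<..}) \<and> Y 0 = x0 \<and>
     (\<forall>t\<ge>0. Y t \<notin> Obs \<and> ((\<lambda>s. f (Y s) (c s)) has_integral (Y t - x0)) {0..t})"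
proof -
  obtain L where L: "\<forall>a\<in>A. L-lipschitz_on (- Obs) (\<lambda>x. f x a)" using lip by blast
  have L0: "L \<ge> 0" using L Ane lipschitz_on_nonneg by blast
  define K where "K = 2*L"
  have K0: "K \<ge> 0" using L0 by (simp add: K_def)
  have Sne: "- Obs \<noteq> {}"
  proof
    assume "- Obs = {}"
    then have "Obs = UNIV" by auto
    then show False using bnd not_bounded_UNIV by metis
  qed
  have "\<forall>a\<in>A. \<exists>G. (\<forall>x\<in>- Obs. G x = f x a) \<and> (\<forall>x y. norm (G x - G y) \<le> K * norm (x - y))"
  proof
    fix a assume a: "a \<in> A"
    show "\<exists>G. (\<forall>x\<in>- Obs. G x = f x a) \<and> (\<forall>x y. norm (G x - G y) \<le> K * norm (x - y))"
      unfolding K_def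
      by (rule lip_extend[OF Sne L0]) (use L a lipschitz_onD in blast)
  qed
  then obtain Gs where Gs: "\<And>a x. a \<in> A \<Longrightarrow> x \<notin> Obs \<Longrightarrow> Gs a x = f x a"
    "\<And>a x y. a \<in> A \<Longrightarrow> norm (Gs a x - Gs a y) \<le> K * norm (x - y)"
    by (metis ComplI)
  have frO: "p \<notin> Obs" if "p \<in> frontier Obs" for p
    using that opn by (simp add: frontier_def interior_open)
  have "\<forall>p\<in>frontier Obs. \<exists>a. a \<in> A \<and> (\<exists>\<delta>>0. \<forall>x w t. x \<notin> Obs \<and> dist x p < \<delta> \<and> dist w (f p a) < \<delta> \<and> 0 < t \<and> t < \<delta>
           \<longrightarrow> x + t *\<^sub>R w \<notin> Obs)"
  proof
    fix p assume p: "p \<in> frontier Obs"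
    then obtain a where a: "a \<in> A" "f p a \<in> interior (clarke_tangent_cone (- Obs) p)" using tang by blast
    show "\<exists>a. a \<in> A \<and> (\<exists>\<delta>>0. \<forall>x w t. x \<notin> Obs \<and> dist x p < \<delta> \<and> dist w (f p a) < \<delta> \<and> 0 < t \<and> t < \<delta>
           \<longrightarrow> x + t *\<^sub>R w \<notin> Obs)"
      using hypertangent[OF LB p a(2)] a(1) by blast
  qed
  then obtain ap \<delta>p where apd: "\<And>p. p \<in> frontier Obs \<Longrightarrow> ap p \<in> A \<and> \<delta>p p > 0 \<and>
     (\<forall>x w t. x \<notin> Obs \<and> dist x p < \<delta>p p \<and> dist w (f p (ap p)) < \<delta>p p \<and> 0 < t \<and> t < \<delta>p p
           \<longrightarrow> x + t *\<^sub>R w \<notin> Obs)"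
    by metis
  define \<rho>p where "\<rho>p p = \<delta>p p / (4*K+2)" for p
  have \<rho>pos: "\<rho>p p > 0" if "p \<in> frontier Obs" for p
    using apd[OF that] K0 by (simp add: \<rho>p_def)
  have cpt: "compact (frontier Obs)" using bnd by (rule compact_frontier_bounded)
  obtain P0 where P0: "P0 \<subseteq> frontier Obs" "finite P0" "frontier Obs \<subseteq> (\<Union>p\<in>P0. ball p (\<rho>p p))"
  proof (rule compactE_image[OF cpt, of "frontier Obs" "\<lambda>p. ball p (\<rho>p p)"])
    show "frontier Obs \<subseteq> (\<Union>p\<in>frontier Obs. ball p (\<rho>p p))" using \<rho>pos by force
  qed auto
  define U where "U = (\<Union>p\<in>P0. ball p (\<rho>p p))"
  have "closed (- (Obs \<union> U))" unfolding U_def using opn by (intro closed_Compl open_Un open_UN) auto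
  moreover have "closure Obs \<inter> - (Obs \<union> U) = {}" using P0(3) unfolding U_def closure_Un_frontier by blast
  moreover have "compact (closure Obs)" using bnd by (simp add: compact_closure)
  ultimately obtain d0 where d0: "d0 > 0" "\<And>z x. z \<in> closure Obs \<Longrightarrow> x \<notin> Obs \<Longrightarrow> x \<notin> U \<Longrightarrow> d0 \<le> dist z x"
    using separate_compact_closed by (metis ComplI UnE)
  obtain B where B: "B > 0" "\<And>z. z \<in> Obs \<Longrightarrow> norm z \<le> B" using bnd bounded_pos by metis
  define as where "as = (SOME a. a \<in> A)"
  have as: "as \<in> A" unfolding as_def using Ane by (simp add: some_in_eq)
  define C0 where "C0 = norm (Gs as 0)"
  define \<tau>p where "\<tau>p p = min (\<delta>p p / 2) (\<rho>p p / (2*(norm (f p (ap p)) + K*\<rho>p p) + 1))" for p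
  define \<tau>f where "\<tau>f = min (1/(4*K+1)) (min (d0/(2*(C0 + K*(2*B+1)) + 1)) (1/(2*(2*(C0+K))+1)))"
  define \<tau> where "\<tau> = Min (insert \<tau>f (\<tau>p ` P0))"
  have fin: "finite (insert \<tau>f (\<tau>p ` P0))" using P0(2) by simp
  have \<tau>fpos: "\<tau>f > 0"
  proof -
    have C0: "C0 \<ge> 0" by (simp add: C0_def)
    have "K*(2*B+1) \<ge> 0" using K0 B by simp
    moreover have aux: "2*(u+v)+1 > 0" if "u \<ge> 0" "v \<ge> 0" for u v :: real using that by simp
    ultimately have "2*(C0 + K*(2*B+1)) + 1 > 0" using C0 by blast
    then have "d0/(2*(C0 + K*(2*B+1)) + 1) > 0" using d0 by simp
    moreover have "2*(2*(C0+K))+1 > 0" using C0 K0 by simp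
    moreover have "4*K+1 > 0" using K0 by linarith
    ultimately show ?thesis unfolding \<tau>f_def by simp
  qed
  have \<tau>ppos: "\<tau>p p > 0" if "p \<in> P0" for p
  proof -
    have pF: "p \<in> frontier Obs" using that P0(1) by auto
    have "K * \<rho>p p \<ge> 0" using K0 \<rho>pos[OF pF] by simp
    then have "2*(norm (f p (ap p)) + K*\<rho>p p) + 1 > 0" by (intro pos_aux) auto
    then have "\<rho>p p / (2*(norm (f p (ap p)) + K*\<rho>p p) + 1) > 0" using \<rho>pos[OF pF] by simp
    then show ?thesis using apd[OF pF] unfolding \<tau>p_def by simp
  qed
  have \<tau>pos: "\<tau> > 0" unfolding \<tau>_def using fin \<tau>fpos \<tau>ppos by (subst Min_gr_iff) auto
  have \<tau>le_f: "\<tau> \<le> \<tau>f" unfolding \<tau>_def using fin by (intro Min_le) auto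
  have \<tau>le_p: "\<tau> \<le> \<tau>p p" if "p \<in> P0" for p unfolding \<tau>_def using fin that by (intro Min_le) auto
  have \<tau>K: "\<tau> * K \<le> 1/2"
  proof -
    have "\<tau> \<le> 1/(4*K+1)" using \<tau>le_f by (simp add: \<tau>f_def)
    then have "\<tau> * (4*K+1) \<le> 1" using K0 by (simp add: field_simps)
    then show ?thesis using \<tau>pos by (simp add: algebra_simps)
  qed
  have step: "\<forall>x t0. \<exists>a y. x \<notin> Obs \<longrightarrow> a \<in> A \<and> y t0 = x \<and>
      (\<forall>t\<in>{t0..t0+\<tau>}. y t \<notin> Obs \<and> ((\<lambda>s. f (y s) a) has_integral (y t - x)) {t0..t})"
  proof (intro allI impI)
    fix x :: "real^2" and t0 :: real
    show "\<exists>a y. x \<notin> Obs \<longrightarrow> a \<in> A \<and> y t0 = x \<and>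
      (\<forall>t\<in>{t0..t0+\<tau>}. y t \<notin> Obs \<and> ((\<lambda>s. f (y s) a) has_integral (y t - x)) {t0..t})"
    proof (cases "x \<notin> Obs")
      case False then show ?thesis by blast
    next
      case xO: True
      show ?thesis
      proof (cases "x \<in> U")
        case True
        then obtain p where p: "p \<in> P0" "dist x p < \<rho>p p" unfolding U_def by (auto simp: dist_commute)
        have pF: "p \<in> frontier Obs" using p P0(1) by auto
        note apdp = apd[OF pF]
        have Gp: "Gs (ap p) p = f p (ap p)" using Gs(1)[of "ap p" p] apdp frO[OF pF] by simp
        have "\<exists>y. y t0 = x \<and> (\<forall>t\<in>{t0..t0+\<tau>}. y t \<notin> Obs \<and> ((\<lambda>s. f (y s) (ap p)) has_integral (y t - x)) {t0..t})"
        proof (rule step_near[where G="Gs (ap p)" and K=K and p=p and \<delta>="\<delta>p p" and \<rho>="\<rho>p p"])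
          show "norm (Gs (ap p) x - Gs (ap p) y) \<le> K * norm (x - y)" for x y using Gs(2) apdp by blast
          show "K \<ge> 0" by (rule K0)
          show "Gs (ap p) x = f x (ap p)" if "x \<notin> Obs" for x using Gs(1) apdp that by blast
          show "\<forall>x w t. x \<notin> Obs \<and> dist x p < \<delta>p p \<and> dist w (Gs (ap p) p) < \<delta>p p \<and> 0 < t \<and> t < \<delta>p p
             \<longrightarrow> x + t *\<^sub>R w \<notin> Obs" using apdp Gp by simp
          show "\<delta>p p > 0" using apdp by simp
          show "\<rho>p p = \<delta>p p / (4*K+2)" by (simp add: \<rho>p_def)
          show "\<tau> > 0" by (rule \<tau>pos)
          show "\<tau> * K \<le> 1/2" by (rule \<tau>K)
          show "\<tau> < \<delta>p p" using \<tau>le_p[OF p(1)] apdp by (simp add: \<tau>p_def)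
          have "\<tau> \<le> \<rho>p p / (2*(norm (f p (ap p)) + K*\<rho>p p) + 1)" using \<tau>le_p[OF p(1)] by (simp add: \<tau>p_def)
          then have "2*\<tau>*(norm (f p (ap p)) + K*\<rho>p p) < \<rho>p p"
            by (intro tau_aux) (use \<rho>pos[OF pF] K0 \<tau>pos in auto)
          then show "2*\<tau>*(norm (Gs (ap p) p) + K*\<rho>p p) \<le> \<rho>p p" using Gp by simp
          show "x \<notin> Obs" by (rule xO)
          show "dist x p < \<rho>p p" by (rule p(2))
        qed
        then show ?thesis using apdp by blast
      next
        case False
        have "\<exists>y. y t0 = x \<and> (\<forall>t\<in>{t0..t0+\<tau>}. y t \<notin> Obs \<and> ((\<lambda>s. f (y s) as) has_integral (y t - x)) {t0..t})"
        proof (rule step_far[where G="Gs as" and K=K and B=B and dz=d0])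
          show "norm (Gs as x - Gs as y) \<le> K * norm (x - y)" for x y using Gs(2) as by blast
          show "K \<ge> 0" by (rule K0)
          show "Gs as x = f x as" if "x \<notin> Obs" for x using Gs(1) as that by blast
          show "B \<ge> 0" using B by simp
          show "norm z \<le> B" if "z \<in> Obs" for z using B that by blast
          show "d0 > 0" by (rule d0(1))
          show "d0 \<le> dist x z" if "z \<in> Obs" for z
            using d0(2)[of z x] that xO False closure_subset by (force simp: dist_commute)
          show "\<tau> > 0" by (rule \<tau>pos)
          show "\<tau> * K \<le> 1/2" by (rule \<tau>K)
          have "\<tau> \<le> d0/(2*(C0 + K*(2*B+1)) + 1)" using \<tau>le_f by (simp add: \<tau>f_def)
          then have "2*\<tau>*(C0 + K*(2*B+1)) < d0"
            by (intro tau_aux) (use d0 K0 B \<tau>pos in \<open>auto simp: C0_def\<close>)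
          then show "2*\<tau>*(norm (Gs as 0) + K*(2*B+1)) < d0" by (simp add: C0_def)
          have "\<tau> \<le> 1/(2*(2*(C0+K))+1)" using \<tau>le_f by (simp add: \<tau>f_def)
          then have "2*\<tau>*(2*(C0+K)) < 1"
            by (intro tau_aux) (use K0 \<tau>pos in \<open>auto simp: C0_def\<close>)
          moreover have "2*\<tau>*(2*(C0+K)) = 2 * (2*\<tau>*(C0 + K))" by (simp add: algebra_simps)
          ultimately show "2*\<tau>*(norm (Gs as 0) + K) \<le> 1/2" unfolding C0_def by linarith
          show "x \<notin> Obs" by (rule xO)
        qed
        then show ?thesis using as by blast
      qed
    qed
  qed
  then obtain sa sy where sasy: "\<And>x t0. x \<notin> Obs \<Longrightarrow> sa x t0 \<in> A \<and> sy x t0 t0 = x \<and>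
      (\<forall>t\<in>{t0..t0+\<tau>}. sy x t0 t \<notin> Obs \<and> ((\<lambda>s. f (sy x t0 s) (sa x t0)) has_integral (sy x t0 t - x)) {t0..t})"
    by metis
  define xs where "xs = rec_nat x0 (\<lambda>k xk. sy xk (real k * \<tau>) (real k * \<tau> + \<tau>))"
  have xs0: "xs 0 = x0" unfolding xs_def by simp
  have xsS: "xs (Suc k) = sy (xs k) (real k * \<tau>) (real k * \<tau> + \<tau>)" for k unfolding xs_def by simp
  have xsO: "xs k \<notin> Obs" for k
  proof (induction k)
    case 0 then show ?case using x0 xs0 by simp
  next
    case (Suc k) then show ?case using sasy[of "xs k" "real k * \<tau>"] \<tau>pos xsS[of k] by auto
  qed
  define ak where "ak k = sa (xs k) (real k * \<tau>)" for k
  define yk where "yk k = sy (xs k) (real k * \<tau>)" for k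
  have akA: "ak k \<in> A" for k using sasy[OF xsO[of k]] ak_def by simp
  have yk0: "yk k (real k * \<tau>) = xs k" for k using sasy[OF xsO[of k]] yk_def by simp
  have ykO: "yk k t \<notin> Obs" if "t \<in> {real k * \<tau>..real k * \<tau> + \<tau>}" for k t
    using sasy[OF xsO[of k]] yk_def that by simp
  have ykI: "((\<lambda>s. f (yk k s) (ak k)) has_integral (yk k t - xs k)) {real k * \<tau>..t}"
    if "t \<in> {real k * \<tau>..real k * \<tau> + \<tau>}" for k t
    using sasy[OF xsO[of k]] yk_def ak_def that by simp
  have ykE: "yk k (real k * \<tau> + \<tau>) = xs (Suc k)" for k using xsS yk_def by simp
  define n where "n t = nat \<lfloor>t / \<tau>\<rfloor>" for t
  have n_eq: "n s = k" if "real k * \<tau> \<le> s" "s < real k * \<tau> + \<tau>" for s k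
  proof -
    have "real k \<le> s / \<tau>" using that \<tau>pos by (simp add: field_simps)
    moreover have "s / \<tau> < real k + 1" using that \<tau>pos by (simp add: field_simps)
    ultimately have "\<lfloor>s / \<tau>\<rfloor> = int k" by (simp add: floor_eq_iff)
    then show ?thesis unfolding n_def by simp
  qed
  have n_bnd: "real (n t) * \<tau> \<le> t \<and> t < real (n t) * \<tau> + \<tau>" if "t \<ge> 0" for t
  proof -
    have fl: "\<lfloor>t / \<tau>\<rfloor> \<ge> 0" using that \<tau>pos by simp
    have f1: "real_of_int \<lfloor>t / \<tau>\<rfloor> \<le> t / \<tau>" "t / \<tau> < real_of_int \<lfloor>t / \<tau>\<rfloor> + 1" by linarith+
    have nr: "real (n t) = real_of_int \<lfloor>t / \<tau>\<rfloor>" unfolding n_def using fl by simp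
    have "real_of_int \<lfloor>t / \<tau>\<rfloor> * \<tau> \<le> (t / \<tau>) * \<tau>"
      by (rule mult_right_mono[OF f1(1)]) (use \<tau>pos in simp)
    then have "real (n t) * \<tau> \<le> t" using \<tau>pos unfolding nr by simp
    moreover have "(t / \<tau>) * \<tau> < (real_of_int \<lfloor>t / \<tau>\<rfloor> + 1) * \<tau>"
      by (rule mult_strict_right_mono[OF f1(2)]) (use \<tau>pos in simp)
    then have "t < real (n t) * \<tau> + \<tau>" using \<tau>pos unfolding nr by (simp add: algebra_simps)
    ultimately show ?thesis by simp
  qed
  define c where "c t = ak (n t)" for t
  define Y where "Y t = yk (n t) t" for t
  define F where "F s = f (Y s) (c s)" for s
  have piece: "(F has_integral (yk k t - xs k)) {real k * \<tau>..t}"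
    if "t \<in> {real k * \<tau>..real k * \<tau> + \<tau>}" for k t
  proof (rule has_integral_spike_finite[OF _ _ ykI[OF that]])
    show "finite {real k * \<tau> + \<tau>}" by simp
    fix s assume s: "s \<in> {real k * \<tau>..t} - {real k * \<tau> + \<tau>}"
    then have "n s = k" using that by (intro n_eq) auto
    then show "F s = f (yk k s) (ak k)" unfolding F_def Y_def c_def by simp
  qed
  have cum: "(F has_integral (xs k - x0)) {0..real k * \<tau>}" for k
  proof (induction k)
    case 0 then show ?case using xs0 has_integral_refl(2)[of F 0] by simp
  next
    case (Suc k)
    have "(F has_integral ((xs k - x0) + (yk k (real k * \<tau> + \<tau>) - xs k))) {0..real k * \<tau> + \<tau>}"
      by (rule has_integral_combine[OF _ _ Suc piece]) (use \<tau>pos in auto)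
    then show ?case using ykE[of k] by (simp add: algebra_simps)
  qed
  have P1: "\<forall>t. c t \<in> A" unfolding c_def using akA by simp
  have P3: "Y 0 = x0" unfolding Y_def using n_eq[of 0 0] \<tau>pos yk0[of 0] xs0 by simp
  have P4: "\<forall>t\<ge>0. Y t \<notin> Obs \<and> ((\<lambda>s. f (Y s) (c s)) has_integral (Y t - x0)) {0..t}"
  proof (intro allI impI conjI)
    fix t :: real assume t: "t \<ge> 0"
    note nb = n_bnd[OF t]
    show "Y t \<notin> Obs" unfolding Y_def using ykO[of t "n t"] nb by simp
    have "(F has_integral ((xs (n t) - x0) + (yk (n t) t - xs (n t)))) {0..t}"
      by (rule has_integral_combine[OF _ _ cum piece]) (use \<tau>pos nb in auto)
    then show "((\<lambda>s. f (Y s) (c s)) has_integral (Y t - x0)) {0..t}"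
      unfolding F_def Y_def by simp
  qed
  have P2: "c \<in> borel_measurable (restrict_space lebesgue {0<..})"
  proof -
    have "(\<lambda>t. \<lfloor>t / \<tau>\<rfloor>) \<in> measurable borel (count_space UNIV)"
      by (rule measurable_compose[OF _ measurable_real_floor]) simp
    then have "(\<lambda>t. ak (nat \<lfloor>t / \<tau>\<rfloor>)) \<in> measurable borel borel"
      by (rule measurable_compose) simp
    then have "c \<in> measurable borel borel" unfolding c_def n_def .
    then have "c \<in> measurable lborel borel" by simp
    then have "c \<in> measurable lebesgue borel" by (rule measurable_completion)
    then show ?thesis by (rule measurable_restrict_space1)
  qed
  show ?thesis
    by (rule exI[of _ c], rule exI[of _ Y], intro conjI; (rule P1 | rule P2 | rule P3 | rule P4))
qed

lemma evader_admissible: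
  fixes Obs :: "(real^2) set" and A :: "'c::topological_space set" and f :: "real^2 \<Rightarrow> 'c \<Rightarrow> real^2"
    and x0 :: "real^2^'m::finite"
  assumes opn: "open Obs" and bnd: "bounded Obs" and LB: "lipschitz_boundary Obs" and Ane: "A \<noteq> {}"
    and lip: "\<exists>L. \<forall>a\<in>A. L-lipschitz_on (- Obs) (\<lambda>x. f x a)"
    and tang: "\<forall>p\<in>frontier Obs. (\<lambda>a. f p a) ` A \<inter> interior (clarke_tangent_cone (- Obs) p) \<noteq> {}"
    and x0: "\<forall>i. x0 $ i \<notin> Obs"
  shows "\<exists>a. admissible_ctrl Obs A f x0 a"
proof -
  have "\<forall>i. \<exists>(c::real \<Rightarrow> 'c) (Y::real \<Rightarrow> real^2). (\<forall>t. c t \<in> A) \<and> c \<in> borel_measurable (restrict_space lebesgue {0<..}) \<and> Y 0 = x0 $ i \<and>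
     (\<forall>t\<ge>0. Y t \<notin> Obs \<and> ((\<lambda>s. f (Y s) (c s)) has_integral (Y t - x0 $ i)) {0..t})"
  proof
    fix i
    show "\<exists>(c::real \<Rightarrow> 'c) (Y::real \<Rightarrow> real^2). (\<forall>t. c t \<in> A) \<and> c \<in> borel_measurable (restrict_space lebesgue {0<..}) \<and> Y 0 = x0 $ i \<and>
     (\<forall>t\<ge>0. Y t \<notin> Obs \<and> ((\<lambda>s. f (Y s) (c s)) has_integral (Y t - x0 $ i)) {0..t})"
      by (rule viability[OF opn bnd LB Ane lip tang]) (use x0 in simp)
  qed
  then have "\<exists>cs. \<forall>i. \<exists>(Y::real \<Rightarrow> real^2). (\<forall>t. cs i t \<in> A) \<and> cs i \<in> borel_measurable (restrict_space lebesgue {0<..}) \<and> Y 0 = x0 $ i \<and>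
     (\<forall>t\<ge>0. Y t \<notin> Obs \<and> ((\<lambda>s. f (Y s) (cs i s)) has_integral (Y t - x0 $ i)) {0..t})"
    by (rule choice)
  then obtain cs where cs: "\<forall>i. \<exists>(Y::real \<Rightarrow> real^2). (\<forall>t. cs i t \<in> A) \<and> cs i \<in> borel_measurable (restrict_space lebesgue {0<..}) \<and> Y 0 = x0 $ i \<and>
     (\<forall>t\<ge>0. Y t \<notin> Obs \<and> ((\<lambda>s. f (Y s) (cs i s)) has_integral (Y t - x0 $ i)) {0..t})"
    by (rule exE)
  then have "\<exists>Ys. \<forall>i. (\<forall>t. cs i t \<in> A) \<and> cs i \<in> borel_measurable (restrict_space lebesgue {0<..}) \<and> Ys i 0 = x0 $ i \<and>
     (\<forall>t\<ge>0. Ys i t \<notin> Obs \<and> ((\<lambda>s. f (Ys i s) (cs i s)) has_integral (Ys i t - x0 $ i)) {0..t})"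
    by (rule choice)
  then obtain Ys where Ys: "\<forall>i. (\<forall>t. cs i t \<in> A) \<and> cs i \<in> borel_measurable (restrict_space lebesgue {0<..}) \<and> Ys i 0 = x0 $ i \<and>
     (\<forall>t\<ge>0. Ys i t \<notin> Obs \<and> ((\<lambda>s. f (Ys i s) (cs i s)) has_integral (Ys i t - x0 $ i)) {0..t})"
    by (rule exE)
  have cY: "(\<forall>t. cs i t \<in> A) \<and> cs i \<in> borel_measurable (restrict_space lebesgue {0<..}) \<and> Ys i 0 = x0 $ i \<and>
     (\<forall>t\<ge>0. Ys i t \<notin> Obs \<and> ((\<lambda>s. f (Ys i s) (cs i s)) has_integral (Ys i t - x0 $ i)) {0..t})" for i
    using Ys by (rule spec)
  define a where "a t = (\<chi> i. cs i t)" for t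
  define E where "E t = (\<chi> i. Ys i t)" for t
  have "is_traj Obs f x0 a E"
    unfolding is_traj_def a_def E_def using cY by (simp add: vec_eq_iff)
  moreover have "\<forall>t>0. \<forall>i. a t $ i \<in> A" unfolding a_def using cY by simp
  moreover have "\<forall>i. (\<lambda>t. a t $ i) \<in> borel_measurable (restrict_space lebesgue {0<..})"
    unfolding a_def using cY by simp
  ultimately show ?thesis unfolding admissible_ctrl_def by blast
qed

theorem lemma4p1:
  fixes Obs :: "(real^2) set"
    and A :: "'ca::topological_space set" and B :: "'cb::topological_space set"
    and f :: "real^2 \<Rightarrow> 'ca \<Rightarrow> real^2" and g :: "real^2 \<Rightarrow> 'cb \<Rightarrow> real^2"
    and X :: "(real^2^'m::finite) \<times> (real^2^'n::finite)"
    and t1 t2 :: real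
  assumes "open Obs" and "bounded Obs" and "lipschitz_boundary Obs"
    and "compact A" and "compact B"
    and "\<exists>L. \<forall>a\<in>A. L-lipschitz_on (- Obs) (\<lambda>x. f x a)"
    and "\<exists>L. \<forall>b\<in>B. L-lipschitz_on (- Obs) (\<lambda>x. g x b)"
    and "\<forall>x\<in>- Obs. convex ((\<lambda>a. f x a) ` A)"
    and "\<forall>x\<in>- Obs. convex ((\<lambda>b. g x b) ` B)"
    and "\<forall>p\<in>frontier Obs. (\<lambda>a. f p a) ` A \<inter> interior (clarke_tangent_cone (- Obs) p) \<noteq> {}"
    and "\<forall>p\<in>frontier Obs. (\<lambda>b. g p b) ` B \<inter> interior (clarke_tangent_cone (- Obs) p) \<noteq> {}"
    and "X \<in> game_domain Obs"
    and "0 \<le> t1" and "t1 < t2"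
    and "\<forall>t\<in>{t1..t2}. X \<in> Gamma Obs A B f g t"
  shows "\<not> continuous (at X within game_domain Obs) (game_value Obs A B f g)"
proof
  note opn = assms(1) and bnd = assms(2) and LB = assms(3) and lipf = assms(6) and tangf = assms(10)
  note XO = assms(12) and t1 = assms(13) and t12 = assms(14) and Gam = assms(15)
  assume cont: "continuous (at X within game_domain Obs) (game_value Obs A B f g)"
  define V where "V = (game_value Obs A B f g :: (real^2^'m) \<times> (real^2^'n) \<Rightarrow> ereal)"
  define \<Omega> where "\<Omega> = (game_domain Obs :: ((real^2^'m) \<times> (real^2^'n)) set)"
  define FS where "FS = (free_space Obs :: ((real^2^'m) \<times> (real^2^'n)) set)"
  define T where "T = (target Obs :: ((real^2^'m) \<times> (real^2^'n)) set)"
  define top where "top = subtopology euclidean FS"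
  define Lv where "Lv t = (level_set Obs A B f g t :: ((real^2^'m) \<times> (real^2^'n)) set)" for t
  have \<Omega>def: "\<Omega> = FS - T" unfolding \<Omega>_def FS_def T_def game_domain_def by simp
  have X\<Omega>: "X \<in> \<Omega>" using XO \<Omega>_def by simp
  have XFS: "X \<in> FS" using X\<Omega> \<Omega>def by simp
  have Lv_def': "Lv t = {Y \<in> \<Omega>. V Y \<ge> ereal t}" for t unfolding Lv_def level_set_def V_def \<Omega>_def by simp
  have GamX: "X \<in> top frontier_of Lv t" if "t \<in> {t1..t2}" for t
    using Gam that unfolding Gamma_def top_def FS_def Lv_def by simp
  have lim: "(V \<longlongrightarrow> V X) (at X within \<Omega>)" using cont unfolding continuous_within V_def \<Omega>_def .
  have nbhd: "\<exists>W. open W \<and> X \<in> W \<and> (\<forall>y\<in>W. y \<noteq> X \<longrightarrow> y \<in> \<Omega> \<longrightarrow> V y \<in> S)" if "open S" "V X \<in> S" for S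
  proof -
    have "eventually (\<lambda>y. V y \<in> S) (at X within \<Omega>)" using lim that by (rule topological_tendstoD)
    then show ?thesis unfolding eventually_at_topological by blast
  qed
  have opn_top: "openin top (W \<inter> FS)" if "open W" for W
    unfolding top_def by (rule openin_subtopology_Int) (simp add: that)
  have VX2: "V X \<ge> ereal t2"
  proof (rule ccontr)
    assume "\<not> V X \<ge> ereal t2"
    then have lt: "V X < ereal t2" by simp
    obtain W where W: "open W" "X \<in> W" "\<And>y. y \<in> W \<Longrightarrow> y \<noteq> X \<Longrightarrow> y \<in> \<Omega> \<Longrightarrow> V y \<in> {..<ereal t2}"
      using nbhd[of "{..<ereal t2}"] lt by auto
    have "X \<in> top closure_of Lv t2" using GamX[of t2] t12 unfolding frontier_of_def by simp
    then obtain y where y: "y \<in> Lv t2" "y \<in> W \<inter> FS"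
      unfolding in_closure_of using opn_top[OF W(1)] W(2) XFS by blast
    have "y \<in> \<Omega>" "V y \<ge> ereal t2" using y(1) unfolding Lv_def' by auto
    then show False using W(3)[of y] y(2) lt by (cases "y = X") auto
  qed
  obtain W1 where W1: "open W1" "X \<in> W1" "\<And>y. y \<in> W1 \<Longrightarrow> y \<in> \<Omega> \<Longrightarrow> y \<in> Lv t1"
  proof -
    have "ereal t1 < ereal t2" using t12 by simp
    then have "ereal t1 < V X" using VX2 by (rule less_le_trans)
    then have lt: "V X \<in> {ereal t1<..}" by simp
    obtain W where W: "open W" "X \<in> W" "\<And>y. y \<in> W \<Longrightarrow> y \<noteq> X \<Longrightarrow> y \<in> \<Omega> \<Longrightarrow> V y \<in> {ereal t1<..}"
      using nbhd[of "{ereal t1<..}"] lt by auto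
    have "y \<in> Lv t1" if "y \<in> W" "y \<in> \<Omega>" for y
      using W(3)[OF that(1) _ that(2)] lt that(2) unfolding Lv_def' by (cases "y = X") auto
    then show ?thesis using that W(1,2) by blast
  qed
  have XnotInt: "X \<notin> top interior_of Lv t1" using GamX[of t1] t12 unfolding frontier_of_def by simp
  have XclT: "X \<in> top closure_of T"
    unfolding in_closure_of
  proof (intro conjI allI impI)
    show "X \<in> topspace top" unfolding top_def using XFS by simp
    fix T' assume T': "X \<in> T' \<and> openin top T'"
    then have "\<exists>W. openin euclidean W \<and> T' = W \<inter> FS" unfolding top_def openin_subtopology by blast
    then obtain W' where W'0: "openin euclidean W'" "T' = W' \<inter> FS" by blast
    have W': "open W'" "T' = W' \<inter> FS" using W'0 by simp_all
    have "openin top ((W' \<inter> W1) \<inter> FS)" using opn_top W'(1) W1(1) by blast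
    moreover have "X \<in> (W' \<inter> W1) \<inter> FS" using T' W' W1(2) XFS by auto
    ultimately have "\<not> (W' \<inter> W1) \<inter> FS \<subseteq> Lv t1"
    proof (intro notI)
      assume "openin top ((W' \<inter> W1) \<inter> FS)" "X \<in> (W' \<inter> W1) \<inter> FS" "(W' \<inter> W1) \<inter> FS \<subseteq> Lv t1"
      then have "X \<in> top interior_of Lv t1" unfolding interior_of_def by (intro CollectI exI[of _ "(W' \<inter> W1) \<inter> FS"]) simp
      then show False using XnotInt by simp
    qed
    then obtain y where y: "y \<in> W'" "y \<in> W1" "y \<in> FS" "y \<notin> Lv t1" by blast
    then have "y \<notin> \<Omega>" using W1(3) by blast
    then have "y \<in> T" using y(3) \<Omega>def by simp
    then show "\<exists>y. y \<in> T \<and> y \<in> T'" using y W' by blast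
  qed
  have XnT: "X \<notin> T" using X\<Omega> \<Omega>def by simp
  have XfrT: "X \<in> top frontier_of T"
    using XclT XnT interior_of_subset[of top T] unfolding frontier_of_def by blast
  have end0: "end_time Obs (\<lambda>t. (E t, P t)) = 0"
    if "is_traj Obs f (fst X) a E" "is_traj Obs g (snd X) b P" for a b E P
  proof -
    have Z0: "(E 0, P 0) = X" using that unfolding is_traj_def by simp
    let ?S = "{ereal t | t. t \<ge> 0 \<and> (E t, P t) \<in> (subtopology euclidean (free_space Obs)) frontier_of (target Obs)}"
    have "(E 0, P 0) \<in> (subtopology euclidean (free_space Obs)) frontier_of (target Obs)"
      using Z0 XfrT unfolding top_def FS_def T_def by simp
    then have "ereal 0 \<in> ?S" by blast
    then have "0 \<in> ?S" by (simp add: zero_ereal_def)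
    then have "Inf ?S \<le> 0" by (rule Inf_lower)
    moreover have "0 \<le> Inf ?S" by (rule Inf_greatest) auto
    ultimately show ?thesis unfolding end_time_def by simp
  qed
  have VX0: "V X \<le> 0"
  proof (cases "\<exists>b. admissible_ctrl Obs B g (snd X) b")
    case False
    have "(\<lambda>b. undefined) \<in> evader_strategies Obs A B f g X"
      unfolding evader_strategies_def using False by simp
    then have "V X \<le> (SUP b \<in> {b. admissible_ctrl Obs B g (snd X) b}. payoff Obs f g X undefined b)"
      unfolding V_def game_value_def by (rule INF_lower2) simp
    also have "\<dots> = bot" using False by simp
    finally have "V X \<le> bot" .
    then show ?thesis by (meson bot_least order_trans)
  next
    case True
    have XT: "X \<in> topspace top \<and> openin top (topspace top)" using XFS unfolding top_def by simp
    have "\<forall>T'. X \<in> T' \<and> openin top T' \<longrightarrow> (\<exists>y. y \<in> T \<and> y \<in> T')" using XclT unfolding in_closure_of by simp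
    then have "X \<in> topspace top \<and> openin top (topspace top) \<longrightarrow> (\<exists>y. y \<in> T \<and> y \<in> topspace top)"
      by (rule spec)
    then have "\<exists>y. y \<in> T \<and> y \<in> topspace top" using XT by (rule mp)
    then obtain y0 where "y0 \<in> T" by blast
    then have y0t: "\<forall>i j. closed_segment (fst y0 $ i) (snd y0 $ j) \<inter> Obs \<noteq> {}"
      unfolding T_def target_def by (cases y0) simp
    have Obsne: "Obs \<noteq> {}"
    proof
      assume "Obs = {}"
      then show False using y0t by simp
    qed
    have "frontier Obs \<noteq> {}"
    proof
      assume "frontier Obs = {}"
      then have "Obs = UNIV" using Obsne frontier_eq_empty by blast
      then show False using bnd not_bounded_UNIV by metis
    qed
    then have Ane: "A \<noteq> {}" using tangf by blast
    have x0: "\<forall>i. fst X $ i \<notin> Obs" using XFS unfolding FS_def free_space_def by (cases X) auto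
    obtain a0 where a0: "admissible_ctrl Obs A f (fst X) a0"
      using evader_admissible[OF opn bnd LB Ane lipf tangf x0] by blast
    obtain E0 where E0: "is_traj Obs f (fst X) a0 E0" using a0 unfolding admissible_ctrl_def by blast
    have "(\<lambda>b. a0) \<in> evader_strategies Obs A B f g X"
      unfolding evader_strategies_def using a0 by simp
    then have "V X \<le> (SUP b \<in> {b. admissible_ctrl Obs B g (snd X) b}. payoff Obs f g X a0 b)"
      unfolding V_def game_value_def by (rule INF_lower2) simp
    also have "\<dots> \<le> 0"
    proof (rule SUP_least)
      fix b assume "b \<in> {b. admissible_ctrl Obs B g (snd X) b}"
      then obtain P0 where P0: "is_traj Obs g (snd X) b P0" unfolding admissible_ctrl_def by blast
      have "payoff Obs f g X a0 b = 0"
        unfolding payoff_def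
      proof (rule the_equality)
        show "\<exists>E P. is_traj Obs f (fst X) a0 E \<and> is_traj Obs g (snd X) b P \<and> 0 = end_time Obs (\<lambda>t. (E t, P t))"
          by (intro exI[of _ E0] exI[of _ P0] conjI E0 P0) (simp add: end0[OF E0 P0])
        fix \<tau> assume "\<exists>E P. is_traj Obs f (fst X) a0 E \<and> is_traj Obs g (snd X) b P \<and> \<tau> = end_time Obs (\<lambda>t. (E t, P t))"
        then obtain E P where EP: "is_traj Obs f (fst X) a0 E" "is_traj Obs g (snd X) b P" "\<tau> = end_time Obs (\<lambda>t. (E t, P t))"
          by blast
        show "\<tau> = 0" using end0[OF EP(1,2)] EP(3) by simp
      qed
      then show "payoff Obs f g X a0 b \<le> 0" by simp
    qed
    finally show ?thesis .
  qed
  from VX2 VX0 have "ereal t2 \<le> 0" by (rule order.trans)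
  then show False using t1 t12 by simp
qed

end
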